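(* For every $n\ge1$, the positive monomial $P(x)=\prod_{i=1}^n x_i$ on $\{0,1\}^n$ has a quadratization using $\lfloor (n-1)/2\rfloor$ auxiliary variables.
   Context: A quadratization of $f:\{0,1\}^n\to\mathbb{R}$ using $m$ auxiliary variables is a polynomial $g(x,y)$ of degree at most $2$ in $x_1,\ldots,x_n,y_1,\ldots,y_m$ such that $f(x)=\min\{g(x,y):y\in\{0,1\}^m\}$ for all $x\in\{0,1\}^n$. *)

theory Defs
  imports Complex_Main
begin

text \<open>Points of {0,1}^N, encoded as functions nat => real that are 0/1 on
  indices below N and 0 elsewhere (so that the set is finite).\<close>
definition bin_vecs :: "nat \<Rightarrow> (nat \<Rightarrow> real) set" where
  "bin_vecs N = {z. \<forall>i. (i < N \<longrightarrow> z i \<in> {0, 1}) \<and> (N \<le> i \<longrightarrow> z i = 0)}"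

definition join :: "nat \<Rightarrow> (nat \<Rightarrow> real) \<Rightarrow> (nat \<Rightarrow> real) \<Rightarrow> (nat \<Rightarrow> real)" where
  "join n x y = (\<lambda>i. if i < n then x i else y (i - n))"

definition quad_poly :: "nat \<Rightarrow> ((nat \<Rightarrow> real) \<Rightarrow> real) \<Rightarrow> bool" where
  "quad_poly N g \<longleftrightarrow> (\<exists>(c::real) (a::nat \<Rightarrow> real) (b::nat \<Rightarrow> nat \<Rightarrow> real).
     \<forall>z. g z = c + (\<Sum>i<N. a i * z i) + (\<Sum>i<N. \<Sum>j<N. b i j * z i * z j))"

definition quadratization :: "nat \<Rightarrow> nat \<Rightarrow> ((nat \<Rightarrow> real) \<Rightarrow> real) \<Rightarrow> ((nat \<Rightarrow> real) \<Rightarrow> real) \<Rightarrow> bool" where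
  "quadratization n m f g \<longleftrightarrow> quad_poly (n + m) g \<and>
     (\<forall>x \<in> bin_vecs n. f x = Min ((\<lambda>y. g (join n x y)) ` bin_vecs m))"

end

theory Submission
  imports Defs
begin

lemma sum_split_add: "(\<Sum>i<(n::nat)+(m::nat). f i) = (\<Sum>i<n. f i) + (\<Sum>k<m. f (n+k))"
  by (induction m) (auto simp: add.assoc)

lemma G_big:
  fixes s :: nat
  assumes "2*m \<le> s"
  shows "(\<Sum>k<m. min 0 (4*real k+3-2*real s)) = 2*real m^2 + real m - 2*real s*real m"
  using assms
proof (induction m)
  case 0 then show ?case by simp
next
  case (Suc m)
  have "min 0 (4*real m+3-2*real s) = 4*real m+3-2*real s" using Suc.prems by auto
  then show ?case using Suc by (simp add: power2_eq_square algebra_simps)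
qed

lemma core:
  fixes s :: nat
  assumes "s \<le> 2*m+2"
  shows "real s*(real s-1)/2 + (\<Sum>k<m. min 0 (4*real k+3-2*real s)) = (if s = 2*m+2 then 1 else 0)"
  using assms
proof (induction m arbitrary: s)
  case 0
  then have "s \<le> 2" by simp
  then have "s = 0 \<or> s = 1 \<or> s = 2" by auto
  then show ?case by auto
next
  case (Suc m)
  show ?case
  proof (cases "s \<le> 2*m+2")
    case True
    note IH = Suc.IH[OF True]
    show ?thesis
    proof (cases "s = 2*m+2")
      case True
      then show ?thesis using IH by (simp add: algebra_simps)
    next
      case False
      then have "min 0 (4*real m+3-2*real s) = 0" using \<open>s \<le> 2*m+2\<close> by auto
      then show ?thesis using IH False by simp
    qed
  next
    case False
    then have disj: "s = 2*m+3 \<or> s = 2*m+4" using Suc.prems by auto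
    have "2*Suc m \<le> s" using False by simp
    note G = G_big[OF this]
    from disj show ?thesis
    proof
      assume s: "s = 2*m+3"
      then have rs: "real s = 2*real m+3" by simp
      show ?thesis unfolding G unfolding rs using s by (simp add: power2_eq_square algebra_simps)
    next
      assume s: "s = 2*m+4"
      then have rs: "real s = 2*real m+4" by simp
      show ?thesis unfolding G unfolding rs using s by (simp add: power2_eq_square algebra_simps)
    qed
  qed
qed

lemma sum_prod_bin:
  fixes x :: "nat \<Rightarrow> real"
  assumes "\<forall>i<n. x i \<in> {0,1}"
  shows "\<exists>s::nat. s \<le> n \<and> (\<Sum>i<n. x i) = real s \<and> (\<Prod>i<n. x i) = (if s = n then 1 else 0)"
  using assms
proof (induction n)
  case 0 then show ?case by simp
next
  case (Suc n)
  then obtain s where s: "s \<le> n" "(\<Sum>i<n. x i) = real s" "(\<Prod>i<n. x i) = (if s = n then 1 else 0)"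
    by auto
  have "x n = 0 \<or> x n = 1" using Suc.prems by auto
  then show ?case
  proof
    assume "x n = 0"
    then show ?thesis using s by (intro exI[of _ s]) auto
  next
    assume "x n = 1"
    then show ?thesis using s by (intro exI[of _ "Suc s"]) auto
  qed
qed

lemma finite_bin_vecs: "finite (bin_vecs m)"
proof (rule finite_subset)
  show "bin_vecs m \<subseteq> (\<lambda>S i. if i \<in> S then 1 else 0) ` Pow {..<m}"
  proof
    fix z assume z: "z \<in> bin_vecs m"
    have "z = (\<lambda>i. if i \<in> {i. i < m \<and> z i = 1} then 1 else 0)"
    proof
      fix i show "z i = (if i \<in> {i. i < m \<and> z i = 1} then 1 else 0)"
        using z unfolding bin_vecs_def by (cases "i < m") auto
    qed
    then show "z \<in> (\<lambda>S i. if i \<in> S then 1 else 0) ` Pow {..<m}" by blast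
  qed
qed simp

theorem theorem5:
  fixes n :: nat
  assumes "n \<ge> 1"
  shows "\<exists>g. quadratization n ((n - 1) div 2) (\<lambda>x. \<Prod>i<n. x i) g"
proof -
  define m where "m = (n - 1) div 2"
  define e :: nat where "e = (if even n then 0 else 1)"
  have ne: "n + e = 2*m+2" using assms unfolding m_def e_def by (cases "even n") (auto elim!: evenE oddE)
  define g where "g = (\<lambda>z::nat\<Rightarrow>real. let S = (\<Sum>i<n. z i) + real e in
      S*(S-1)/2 + (\<Sum>k<m. z (n+k) * (4*real k+3 - 2*S)))"
  have qp: "quad_poly (n+m) g"
    unfolding quad_poly_def
  proof (intro exI allI)
    fix z :: "nat \<Rightarrow> real"
    define T where "T = (\<Sum>i<n. z i)"
    define a where "a = (\<lambda>i. if i < n then (2*real e-1)/2 else 4*real (i-n)+3-2*real e)"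
    define b :: "nat \<Rightarrow> nat \<Rightarrow> real" where "b = (\<lambda>i j. if j < n then (if i < n then 1/2 else -2) else 0)"
    have lin: "(\<Sum>i<n+m. a i * z i) = (2*real e-1)/2 * T + (\<Sum>k<m. (4*real k+3-2*real e) * z (n+k))"
      unfolding sum_split_add a_def T_def by (simp add: sum_distrib_left)
    have inner: "(\<Sum>j<n+m. b i j * z i * z j) = (if i < n then 1/2 else -2) * z i * T" for i
      unfolding sum_split_add b_def T_def by (simp add: sum_distrib_left mult.assoc)
    have quad: "(\<Sum>i<n+m. \<Sum>j<n+m. b i j * z i * z j) = T*T/2 - 2*T*(\<Sum>k<m. z (n+k))"
    proof -
      have "(\<Sum>i<n+m. \<Sum>j<n+m. b i j * z i * z j) = (\<Sum>i<n+m. (if i < n then 1/2 else -2) * z i * T)"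
        by (simp add: inner)
      also have "\<dots> = T*T/2 - 2*T*(\<Sum>k<m. z (n+k))"
        unfolding sum_split_add by (simp add: T_def sum_distrib_left sum_distrib_right sum_divide_distrib
          sum_negf mult.commute mult.left_commute sum.swap[of _ "{..<m}"])
      finally show ?thesis .
    qed
    have ee: "real e * real e = real e" unfolding e_def by simp
    show "g z = (real e*real e - real e)/2 + (\<Sum>i<n+m. a i * z i) + (\<Sum>i<n+m. \<Sum>j<n+m. b i j * z i * z j)"
      unfolding lin quad g_def Let_def T_def[symmetric] ee
      by (simp add: ee algebra_simps sum.distrib sum_subtractf sum_distrib_left sum_distrib_right add_divide_distrib diff_divide_distrib)
  qed
  have minp: "(\<Prod>i<n. x i) = Min ((\<lambda>y. g (join n x y)) ` bin_vecs m)" if x: "x \<in> bin_vecs n" for x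
  proof -
    obtain s where s: "s \<le> n" "(\<Sum>i<n. x i) = real s" "(\<Prod>i<n. x i) = (if s = n then 1 else 0)"
      using sum_prod_bin[of n x] x unfolding bin_vecs_def by auto
    define s' where "s' = s + e"
    have s'le: "s' \<le> 2*m+2" using s ne unfolding s'_def by simp
    have s'eq: "(s' = 2*m+2) = (s = n)" using ne unfolding s'_def by auto
    define w where "w = (\<lambda>k. 4*real k+3-2*real s')"
    define A where "A = real s'*(real s'-1)/2"
    have gj: "g (join n x y) = A + (\<Sum>k<m. y k * w k)" for y
    proof -
      have "(\<Sum>i<n. join n x y i) = real s" using s by (simp add: join_def)
      moreover have "join n x y (n+k) = y k" for k by (simp add: join_def)
      ultimately show ?thesis unfolding g_def Let_def A_def w_def s'_def by simp
    qed
    define ys where "ys = (\<lambda>k. if k < m \<and> w k < 0 then 1 else (0::real))"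
    have ysb: "ys \<in> bin_vecs m" unfolding ys_def bin_vecs_def by auto
    have ysv: "(\<Sum>k<m. ys k * w k) = (\<Sum>k<m. min 0 (w k))"
      by (rule sum.cong) (auto simp: ys_def)
    have ge: "(\<Sum>k<m. y k * w k) \<ge> (\<Sum>k<m. min 0 (w k))" if "y \<in> bin_vecs m" for y
    proof (rule sum_mono)
      fix k assume "k \<in> {..<m}"
      then have "y k = 0 \<or> y k = 1" using that unfolding bin_vecs_def by auto
      then show "min 0 (w k) \<le> y k * w k" by auto
    qed
    have "Min ((\<lambda>y. g (join n x y)) ` bin_vecs m) = A + (\<Sum>k<m. min 0 (w k))"
    proof (rule Min_eqI)
      show "finite ((\<lambda>y. g (join n x y)) ` bin_vecs m)" using finite_bin_vecs by simp
      show "A + (\<Sum>k<m. min 0 (w k)) \<le> y" if "y \<in> (\<lambda>y. g (join n x y)) ` bin_vecs m" for y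
        using that ge gj by force
      show "A + (\<Sum>k<m. min 0 (w k)) \<in> (\<lambda>y. g (join n x y)) ` bin_vecs m"
        using ysb ysv gj by (metis image_eqI)
    qed
    also have "\<dots> = (if s' = 2*m+2 then 1 else 0)"
      unfolding A_def w_def using core[OF s'le] by simp
    finally show ?thesis using s s'eq by simp
  qed
  show ?thesis
    unfolding m_def[symmetric] quadratization_def using qp minp by blast
qed

end
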